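(* Let $n>1$ and let $G$ be a bipartite graph having two vertices $x$ and $y$ in the same partite set such that $N(x)$ is a proper subset of $N(y)$. Let $H=G+K_1$ and suppose $H[\overline{K_n}]$ admits a local distance antimagic labeling. Then $\chi_{ld}(H[\overline{K_{n}}])\geq 4$.
   Context: All graphs are finite, simple and undirected. $N(v)$ is the open neighborhood of $v$. For a graph $G=(V,E)$ of order $N$ without isolated vertices, a bijection $f\colon V\to\{1,2,\dots,N\}$ is a local distance antimagic labeling if $w(u)\neq w(v)$ for every edge $uv$, where $w(u)=\sum_{x\in N(u)}f(x)$. $\chi_{ld}(G)$ is the minimum number of distinct weights over all local distance antimagic labelings of $G$. $\overline{K_n}$ is the edgeless graph on $n$ vertices. $G+K_1$ is $G$ together with a new vertex adjacent to all vertices of $G$. The lexicographic product $G[H]$ has vertex set $V(G)\times V(H)$, with $(g,h)$ adjacent to $(g',h')$ iff $gg'\in E(G)$, or $g=g'$ and $hh'\in E(H)$. *)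

theory Defs
  imports Main
begin

definition simple_graph :: "'a set \<Rightarrow> ('a \<Rightarrow> 'a \<Rightarrow> bool) \<Rightarrow> bool" where
  "simple_graph V E \<longleftrightarrow> finite V \<and> (\<forall>u v. E u v \<longrightarrow> u \<in> V \<and> v \<in> V)
     \<and> (\<forall>u v. E u v \<longrightarrow> E v u) \<and> (\<forall>u. \<not> E u u)"

definition nbhd :: "'a set \<Rightarrow> ('a \<Rightarrow> 'a \<Rightarrow> bool) \<Rightarrow> 'a \<Rightarrow> 'a set" where
  "nbhd V E u = {x \<in> V. E u x}"

definition bipartition :: "'a set \<Rightarrow> ('a \<Rightarrow> 'a \<Rightarrow> bool) \<Rightarrow> 'a set \<Rightarrow> 'a set \<Rightarrow> bool" where
  "bipartition V E A B \<longleftrightarrow> A \<union> B = V \<and> A \<inter> B = {}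
     \<and> (\<forall>u\<in>A. \<forall>v\<in>A. \<not> E u v) \<and> (\<forall>u\<in>B. \<forall>v\<in>B. \<not> E u v)"

definition join_K1_V :: "'a set \<Rightarrow> 'a option set" where
  "join_K1_V V = insert None (Some ` V)"

fun join_K1_E :: "('a \<Rightarrow> 'a \<Rightarrow> bool) \<Rightarrow> 'a option \<Rightarrow> 'a option \<Rightarrow> bool" where
  "join_K1_E E (Some u) (Some v) = E u v"
| "join_K1_E E None (Some v) = True"
| "join_K1_E E (Some u) None = True"
| "join_K1_E E None None = False"

definition lex_V :: "'a set \<Rightarrow> 'b set \<Rightarrow> ('a \<times> 'b) set" where
  "lex_V VG VH = VG \<times> VH"

definition lex_E :: "('a \<Rightarrow> 'a \<Rightarrow> bool) \<Rightarrow> ('b \<Rightarrow> 'b \<Rightarrow> bool) \<Rightarrow> 'a \<times> 'b \<Rightarrow> 'a \<times> 'b \<Rightarrow> bool" where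
  "lex_E EG EH p q \<longleftrightarrow> EG (fst p) (fst q) \<or> (fst p = fst q \<and> EH (snd p) (snd q))"

definition empty_V :: "nat \<Rightarrow> nat set" where
  "empty_V n = {0..<n}"

definition empty_E :: "nat \<Rightarrow> nat \<Rightarrow> bool" where
  "empty_E u v = False"

definition ld_weight :: "'a set \<Rightarrow> ('a \<Rightarrow> 'a \<Rightarrow> bool) \<Rightarrow> ('a \<Rightarrow> nat) \<Rightarrow> 'a \<Rightarrow> nat" where
  "ld_weight V E f u = (\<Sum>x\<in>nbhd V E u. f x)"

definition ld_labeling :: "'a set \<Rightarrow> ('a \<Rightarrow> 'a \<Rightarrow> bool) \<Rightarrow> ('a \<Rightarrow> nat) \<Rightarrow> bool" where
  "ld_labeling V E f \<longleftrightarrow> bij_betw f V {1..card V}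
     \<and> (\<forall>u\<in>V. \<forall>v\<in>V. E u v \<longrightarrow> ld_weight V E f u \<noteq> ld_weight V E f v)"

definition chi_ld :: "'a set \<Rightarrow> ('a \<Rightarrow> 'a \<Rightarrow> bool) \<Rightarrow> nat" where
  "chi_ld V E = Min {card (ld_weight V E f ` V) | f. ld_labeling V E f}"

end

theory Submission
  imports Defs
begin

lemma sum_strict_aux:
  fixes g :: "'b \<Rightarrow> nat"
  assumes "finite B" "A \<subseteq> B" "p \<in> B" "p \<notin> A" "g p > 0"
  shows "sum g A < sum g B"
proof -
  have "sum g B = sum g A + sum g (B - A)" using assms by (metis sum.subset_diff add.commute)
  moreover have "g p \<le> sum g (B - A)" using assms by (intro member_le_sum) auto
  ultimately show ?thesis using assms by linarith
qed

lemma card_four: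
  assumes "finite S" "a \<in> S" "b \<in> S" "c \<in> S" "d \<in> S"
    "g a \<noteq> g b" "g a \<noteq> g c" "g a \<noteq> g d" "g b \<noteq> g c" "g b \<noteq> g d" "g c \<noteq> g d"
  shows "card (g ` S) \<ge> 4"
proof -
  have "{g a, g b, g c, g d} \<subseteq> g ` S" using assms by auto
  moreover have "card {g a, g b, g c, g d} = 4" using assms by simp
  ultimately show ?thesis using assms(1) by (metis card_mono finite_imageI)
qed

theorem mainTheorem16:
  fixes V :: "'a set" and E :: "'a \<Rightarrow> 'a \<Rightarrow> bool" and n :: nat and x y :: 'a
  assumes "simple_graph V E"
    and "n > 1"
    and "\<exists>A B. bipartition V E A B \<and> x \<in> A \<and> y \<in> A"
    and "nbhd V E x \<subset> nbhd V E y"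
    and "\<exists>f. ld_labeling (lex_V (join_K1_V V) (empty_V n))
                 (lex_E (join_K1_E E) empty_E) f"
  shows "chi_ld (lex_V (join_K1_V V) (empty_V n)) (lex_E (join_K1_E E) empty_E) \<ge> 4"
proof -
  define VH where "VH = join_K1_V V"
  define EH where "EH = join_K1_E E"
  define V' where "V' = lex_V VH (empty_V n)"
  define E' where "E' = lex_E EH empty_E"
  have sg: "finite V" "\<And>u v. E u v \<Longrightarrow> u \<in> V \<and> v \<in> V" "\<And>u v. E u v \<Longrightarrow> E v u"
    using assms(1) unfolding simple_graph_def by auto
  have E'_simp: "\<And>p q. E' p q = EH (fst p) (fst q)" unfolding E'_def lex_E_def empty_E_def by simp
  have finV': "finite V'" unfolding V'_def lex_V_def VH_def join_K1_V_def empty_V_def using sg by simp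
  have inV': "\<And>u. (u, 0) \<in> V' \<longleftrightarrow> u \<in> VH" unfolding V'_def lex_V_def empty_V_def using assms(2) by auto
  have nb: "\<And>u. nbhd V' E' (u, 0) = {q \<in> V'. EH u (fst q)}" unfolding nbhd_def E'_simp by simp
  obtain A B where AB: "bipartition V E A B" "x \<in> A" "y \<in> A" using assms(3) by blast
  obtain z where z: "z \<in> V" "E y z" "\<not> E x z" using assms(4) unfolding nbhd_def by auto
  have xV: "x \<in> V" and yV: "y \<in> V" using AB unfolding bipartition_def by auto
  have sub: "\<And>t. E x t \<Longrightarrow> E y t" using assms(4) sg(2) unfolding nbhd_def by auto
  have key: "card (ld_weight V' E' f ` V') \<ge> 4" if lab: "ld_labeling V' E' f" for f
  proof -
    define w where "w u = ld_weight V' E' f (u, 0)" for u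
    have pos: "\<And>p. p \<in> V' \<Longrightarrow> f p > 0"
      using lab unfolding ld_labeling_def bij_betw_def by fastforce
    have adj: "\<And>u v. u \<in> VH \<Longrightarrow> v \<in> VH \<Longrightarrow> EH u v \<Longrightarrow> w u \<noteq> w v"
      using lab inV' unfolding ld_labeling_def w_def E'_simp by (metis fst_conv)
    have strict: "w u < w v" if "\<And>s. EH u s \<Longrightarrow> EH v s" "t \<in> VH" "EH v t" "\<not> EH u t" for u v t
      unfolding w_def ld_weight_def
      apply (rule sum_strict_aux[where p="(t,0)"])
      using that finV' inV' pos unfolding nb by auto
    have VHs: "None \<in> VH" "\<And>v. v \<in> V \<Longrightarrow> Some v \<in> VH" unfolding VH_def join_K1_V_def by auto
    have xy: "w (Some x) < w (Some y)"
      apply (rule strict[where t="Some z"])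
      subgoal for s by (cases s) (auto simp: EH_def sub)
      using z VHs by (auto simp: EH_def)
    show ?thesis
    proof (cases "\<exists>b. E x b")
      case True
      then obtain b where b: "E x b" by blast
      have bV: "b \<in> V" using sg b by blast
      show ?thesis
        apply (rule card_four[where a="(None,0)" and b="(Some x,0)" and c="(Some y,0)" and d="(Some b,0)"])
        using finV' inV' VHs xV yV bV xy adj[of None "Some x"] adj[of None "Some y"] adj[of None "Some b"]
          adj[of "Some x" "Some b"] adj[of "Some y" "Some b"] b sub[OF b]
        by (auto simp: w_def EH_def)
    next
      case False
      have xz: "w (Some x) < w (Some z)"
        apply (rule strict[where t="Some y"])
        subgoal for s using False by (cases s) (auto simp: EH_def)
        using z VHs yV sg(3) False by (auto simp: EH_def)
      show ?thesis
        apply (rule card_four[where a="(None,0)" and b="(Some x,0)" and c="(Some y,0)" and d="(Some z,0)"])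
        using finV' inV' VHs xV yV z xy xz adj[of None "Some x"] adj[of None "Some y"] adj[of None "Some z"]
          adj[of "Some y" "Some z"]
        by (auto simp: w_def EH_def)
    qed
  qed
  define S where "S = {card (ld_weight V' E' f ` V') | f. ld_labeling V' E' f}"
  have "S \<subseteq> {..card V'}" unfolding S_def using card_image_le[OF finV'] by auto
  hence finS: "finite S" using finite_subset by blast
  have neS: "S \<noteq> {}" using assms(5) unfolding S_def V'_def E'_def VH_def EH_def by blast
  have "\<forall>s\<in>S. 4 \<le> s" unfolding S_def using key by blast
  hence "4 \<le> Min S" using finS neS by simp
  thus ?thesis unfolding chi_ld_def S_def V'_def E'_def VH_def EH_def .
qed

end
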